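(* Let $q \in \mathbb{R}^d$ and let $\mathcal{Q} = \lbrace i : q[i] \neq 0 \rbrace \subset \lbrace 1,\ldots,d\rbrace$. Let $\lbrace z_1,\ldots,z_m\rbrace \subset \mathbb{R}^d$ be a set of orthonormal vectors, and let $\mathcal{Z}_j = \lbrace i : z_j[i] \neq 0 \rbrace$ for $j = 1,\ldots,m$. Let $u$ be the output of twice-iterated classical Gram-Schmidt applied to $q$ over $\lbrace z_1,\ldots,z_m\rbrace$, i.e. $t_0 = q$, $t_{j+1} = t_j - \sum_{l=1}^m (t_j' z_l) z_l$ for $j = 0,1$, and $u = t_2$ (in exact arithmetic). Then $$\mathcal{U} := \lbrace i : u[i] \neq 0\rbrace \subset \Big(\bigcup_{j \in \mathfrak{Q}} \mathcal{Z}_j\Big) \cup \mathcal{Q}, \qquad \text{where } \mathfrak{Q} = \lbrace j : \mathcal{Q} \cap \mathcal{Z}_j \neq \emptyset \rbrace \subset \lbrace 1,\ldots,m\rbrace.$$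
   Context: For a vector $z \in \mathbb{R}^d$, $z[i]$ denotes its $i$-th component; $'$ denotes transpose. *)

theory Defs
  imports "HOL-Analysis.Analysis"
begin

definition vsupp :: "real ^ 'd \<Rightarrow> 'd set" where
  "vsupp v = {i. v $ i \<noteq> 0}"

definition cgs_step :: "(nat \<Rightarrow> real ^ 'd) \<Rightarrow> nat \<Rightarrow> real ^ 'd \<Rightarrow> real ^ 'd" where
  "cgs_step z m t = t - (\<Sum>l = 1..m. (t \<bullet> z l) *\<^sub>R z l)"

end

theory Submission
  imports Defs
begin

lemma step_orth:
  fixes q :: "real ^ 'd" and z :: "nat \<Rightarrow> real ^ 'd" and m :: nat
  assumes orthonormal: "\<And>j l. j \<in> {1..m} \<Longrightarrow> l \<in> {1..m} \<Longrightarrow>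
             z j \<bullet> z l = (if j = l then 1 else 0)"
    and l: "l \<in> {1..m}"
  shows "cgs_step z m q \<bullet> z l = 0"
proof -
  have "(\<Sum>k = 1..m. (q \<bullet> z k) *\<^sub>R z k) \<bullet> z l = (\<Sum>k = 1..m. (q \<bullet> z k) * (z k \<bullet> z l))"
    by (simp add: inner_sum_left)
  also have "\<dots> = (\<Sum>k = 1..m. if k = l then q \<bullet> z k else 0)"
    by (rule sum.cong) (use l in \<open>auto simp: orthonormal\<close>)
  also have "\<dots> = q \<bullet> z l" using l by (simp add: sum.delta')
  finally show ?thesis unfolding cgs_step_def by (simp add: inner_diff_left)
qed

theorem mainTheorem1:
  fixes q :: "real ^ 'd" and z :: "nat \<Rightarrow> real ^ 'd" and m :: nat
  assumes orthonormal: "\<And>j l. j \<in> {1..m} \<Longrightarrow> l \<in> {1..m} \<Longrightarrow>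
             z j \<bullet> z l = (if j = l then 1 else 0)"
  shows "vsupp (cgs_step z m (cgs_step z m q)) \<subseteq>
           (\<Union>j \<in> {j \<in> {1..m}. vsupp q \<inter> vsupp (z j) \<noteq> {}}. vsupp (z j)) \<union> vsupp q"
proof -
  have eq: "cgs_step z m (cgs_step z m q) = cgs_step z m q"
    unfolding cgs_step_def[of z m "cgs_step z m q"]
    using step_orth[OF orthonormal] by simp
  show ?thesis unfolding eq
  proof
    fix i assume "i \<in> vsupp (cgs_step z m q)"
    hence ne: "q $ i - (\<Sum>l = 1..m. (q \<bullet> z l) * z l $ i) \<noteq> 0"
      by (simp add: vsupp_def cgs_step_def sum_component)
    show "i \<in> (\<Union>j \<in> {j \<in> {1..m}. vsupp q \<inter> vsupp (z j) \<noteq> {}}. vsupp (z j)) \<union> vsupp q"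
    proof (cases "q $ i = 0")
      case False thus ?thesis by (simp add: vsupp_def)
    next
      case True
      with ne have "(\<Sum>l = 1..m. (q \<bullet> z l) * z l $ i) \<noteq> 0" by simp
      then obtain l where l: "l \<in> {1..m}" "(q \<bullet> z l) * z l $ i \<noteq> 0"
        using sum.neutral by (metis (no_types, lifting))
      hence "(\<Sum>k\<in>UNIV. q $ k * z l $ k) \<noteq> 0" by (simp add: inner_vec_def)
      then obtain k where "q $ k * z l $ k \<noteq> 0"
        using sum.neutral by (metis (no_types, lifting))
      hence "k \<in> vsupp q \<inter> vsupp (z l)" by (simp add: vsupp_def)
      moreover have "i \<in> vsupp (z l)" using l by (simp add: vsupp_def)
      ultimately show ?thesis using l by blast
    qed
  qed
qed

end
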